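(* Let $C\subseteq\mathbb{F}_q^n$ be a linear code, $t\ge 1$ an integer, and $(A,B)$ a $2$-power $t$-error locating pair for $C$. Let $\mathbf{y}=\mathbf{c}+\mathbf{e}$ with $\mathbf{c}\in C$ and $\mathrm{w}(\mathbf{e})=t$, $I_{\mathbf{e}}=\mathrm{supp}(\mathbf{e})$, and let $M_1,M_2,M$ be as defined in the context. Run the following algorithm on input $(C,\mathbf{y},t,A,B)$: compute $M$; set $J=Z(M)$; with $H$ a full-rank parity-check matrix of $C$ and $H_J$ the submatrix of $H$ formed by the columns with index in $J$, if the linear system $H_J\mathbf{u}^T=H\mathbf{y}^T$ (unknown $\mathbf{u}\in\mathbb{F}_q^{|J|}$) has no nonzero solution, return failure; otherwise take a nonzero solution $\mathbf{u}$, let $\mathbf{e}'\in\mathbb{F}_q^n$ have $\mathbf{e}'_J=\mathbf{u}$ and $e'_i=0$ for $i\notin J$, and return $\mathbf{y}-\mathbf{e}'$. Then the algorithm returns $\mathbf{c}$ if and only if $A(I_{\mathbf{e}})=M$.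
   Context: All codes are $\mathbb{F}_q$-linear subspaces of $\mathbb{F}_q^n$. $\mathbf{u}*\mathbf{v}=(u_1v_1,\dots,u_nv_n)$, $\mathbf{u}^i=(u_1^i,\dots,u_n^i)$; $A*B$ is the span of all $\mathbf{a}*\mathbf{b}$; $\langle\mathbf{u},\mathbf{v}\rangle=\sum_iu_iv_i$ and $X^\perp$ is the dual. $\mathrm{w}$ Hamming weight, $\mathrm{d}$ minimum distance, $\mathrm{supp}(\mathbf{x})=\{i:x_i\ne0\}$. For $J=\{j_1<\dots<j_s\}\subseteq\{1,\dots,n\}$, $\mathbf{x}_J=(x_{j_1},\dots,x_{j_s})$; $A(J)=\{\mathbf{a}\in A:\mathbf{a}_J=\mathbf{0}\}\subseteq\mathbb{F}_q^n$; $Z(M)=\{i: a_i=0\ \forall\mathbf{a}\in M\}$. $M_1=\{\mathbf{a}\in A\mid \langle \mathbf{a}*\mathbf{y},\mathbf{b}\rangle=0\ \forall \mathbf{b}\in B\}$, $M_2=\{\mathbf{a}\in A\mid \langle \mathbf{a}*\mathbf{y}^2,\mathbf{v}\rangle=0\ \forall \mathbf{v}\in (B^{\perp}*C)^{\perp}\}$, $M=M_1\cap M_2$. A pair $(A,B)$ is a $2$-power $t$-error locating pair for $C$ if: (1) $A*B\subseteq C^\perp$; (2) $\dim A>t$; (3) $\mathrm{d}(A^\perp)>t$; (4) $\mathrm{d}(A)+\mathrm{d}(C)>n$; (5) $\dim B+\dim (B^\perp*C)^\perp\ge t$. *)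

theory Defs
  imports "HOL-Analysis.Analysis"
begin

text \<open>Vectors of F_q^n are modelled as 'a^'n with 'a a finite field and 'n a finite
index type (n = CARD('n)). Linear codes are subspaces w.r.t. the library vector space
structure vec (scalar multiplication *s).\<close>

definition smul :: "'a::field^'n \<Rightarrow> 'a^'n \<Rightarrow> 'a^'n" where
  "smul u v = (\<chi> i. u $ i * v $ i)"

definition vpow :: "'a::field^'n \<Rightarrow> nat \<Rightarrow> 'a^'n" where
  "vpow u k = (\<chi> i. u $ i ^ k)"

definition dotp :: "'a::field^'n::finite \<Rightarrow> 'a^'n \<Rightarrow> 'a" where
  "dotp u v = (\<Sum>i\<in>UNIV. u $ i * v $ i)"

definition star_code :: "('a::field^'n) set \<Rightarrow> ('a^'n) set \<Rightarrow> ('a^'n) set" where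
  "star_code A B = vec.span {smul a b | a b. a \<in> A \<and> b \<in> B}"

definition dual :: "('a::field^'n::finite) set \<Rightarrow> ('a^'n) set" where
  "dual X = {v. \<forall>x\<in>X. dotp x v = 0}"

definition supp :: "'a::zero^'n \<Rightarrow> 'n set" where
  "supp x = {i. x $ i \<noteq> 0}"

definition wt :: "'a::zero^'n::finite \<Rightarrow> nat" where
  "wt x = card (supp x)"

text \<open>Minimum distance; for the zero code we use n+1 (playing the role of infinity).\<close>
definition mindist :: "('a::zero^'n::finite) set \<Rightarrow> nat" where
  "mindist X = (if X \<subseteq> {0} then CARD('n) + 1 else Min {wt x | x. x \<in> X \<and> x \<noteq> 0})"

definition vanish_on :: "('a::zero^'n) set \<Rightarrow> 'n set \<Rightarrow> ('a^'n) set" where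
  "vanish_on A J = {a \<in> A. \<forall>j\<in>J. a $ j = 0}"

definition zero_set :: "('a::zero^'n) set \<Rightarrow> 'n set" where
  "zero_set M = {i. \<forall>a\<in>M. a $ i = 0}"

definition M1 :: "('a::field^'n::finite) set \<Rightarrow> ('a^'n) set \<Rightarrow> 'a^'n \<Rightarrow> ('a^'n) set" where
  "M1 A B y = {a \<in> A. \<forall>b\<in>B. dotp (smul a y) b = 0}"

definition M2 :: "('a::field^'n::finite) set \<Rightarrow> ('a^'n) set \<Rightarrow> ('a^'n) set \<Rightarrow> 'a^'n \<Rightarrow> ('a^'n) set" where
  "M2 A B C y = {a \<in> A. \<forall>v\<in>dual (star_code (dual B) C). dotp (smul a (vpow y 2)) v = 0}"

definition Mset :: "('a::field^'n::finite) set \<Rightarrow> ('a^'n) set \<Rightarrow> ('a^'n) set \<Rightarrow> 'a^'n \<Rightarrow> ('a^'n) set" where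
  "Mset A B C y = M1 A B y \<inter> M2 A B C y"

definition two_power_elp :: "('a::field^'n::finite) set \<Rightarrow> ('a^'n) set \<Rightarrow> ('a^'n) set \<Rightarrow> nat \<Rightarrow> bool" where
  "two_power_elp C A B t \<longleftrightarrow>
     star_code A B \<subseteq> dual C \<and>
     vec.dim A > t \<and>
     mindist (dual A) > t \<and>
     mindist A + mindist C > CARD('n) \<and>
     vec.dim B + vec.dim (dual (star_code (dual B) C)) \<ge> t"

text \<open>H given by its list of rows; H x^T is the list of inner products.\<close>
definition Hmul :: "('a::field^'n::finite) list \<Rightarrow> 'a^'n \<Rightarrow> 'a list" where
  "Hmul H x = map (\<lambda>h. dotp h x) H"

definition full_rank_parity_check :: "('a::field^'n::finite) list \<Rightarrow> ('a^'n) set \<Rightarrow> bool" where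
  "full_rank_parity_check H C \<longleftrightarrow>
     distinct H \<and> vec.independent (set H) \<and> (\<forall>x. x \<in> C \<longleftrightarrow> Hmul H x = map (\<lambda>_. 0) H)"

text \<open>Possible outputs of the (nondeterministic: "take a nonzero solution") decoding
algorithm; None = failure. A nonzero u in F_q^|J| with e'_J = u, e' zero off J, is the
same as a nonzero e' supported in J, and H_J u^T = H e'^T.\<close>
definition alg_outputs :: "('a::field^'n::finite) set \<Rightarrow> 'a^'n \<Rightarrow> nat \<Rightarrow> ('a^'n) set \<Rightarrow> ('a^'n) set
     \<Rightarrow> ('a^'n) list \<Rightarrow> ('a^'n) option set" where
  "alg_outputs C y t A B H =
    (let J = zero_set (Mset A B C y);
         sols = {e'. e' \<noteq> 0 \<and> (\<forall>i. i \<notin> J \<longrightarrow> e' $ i = 0) \<and> Hmul H e' = Hmul H y}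
     in if sols = {} then {None} else (\<lambda>e'. Some (y - e')) ` sols)"

end

theory Submission imports Defs begin
lemma exists_vanish:
  fixes A :: "('a::field^'n::finite) set"
  assumes sA: "vec.subspace A" and card: "card I < vec.dim A"
  shows "\<exists>a\<in>A. a \<noteq> 0 \<and> (\<forall>i\<in>I. a $ i = 0)"
proof (rule ccontr)
  assume nex: "\<not> ?thesis"
  define f :: "'a^'n \<Rightarrow> 'a^'n" where "f = (\<lambda>a. \<chi> i. if i \<in> I then a $ i else 0)"
  have lin: "Vector_Spaces.linear (*s) (*s) f"
    unfolding Vector_Spaces.linear_iff f_def
    by (auto simp: vec_eq_iff vec.vector_space_axioms)
  have spanA: "vec.span A = A" using sA by (simp add: vec.span_eq_iff)
  have inj: "inj_on f (vec.span A)"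
    unfolding spanA
  proof (rule inj_onI)
    fix a b assume ab: "a \<in> A" "b \<in> A" "f a = f b"
    have "a - b \<in> A" using sA ab by (simp add: vec.subspace_diff)
    moreover have "\<forall>i\<in>I. (a - b) $ i = 0"
      using ab(3) unfolding f_def by (auto simp: vec_eq_iff split: if_splits)
    ultimately have "a - b = 0" using nex by blast
    then show "a = b" by simp
  qed
  have d1: "vec.dim (f ` A) = vec.dim A"
    by (rule vec.dim_image_eq[OF lin inj])
  have sub: "f ` A \<subseteq> vec.span ((\<lambda>i. axis i (1::'a)) ` I)"
  proof
    fix x assume "x \<in> f ` A"
    then obtain a where x: "x = f a" by auto
    have "x = (\<Sum>i\<in>I. a $ i *s axis i (1::'a))"
      unfolding x f_def by (auto simp: vec_eq_iff axis_def if_distrib cong: if_cong)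
    also have "\<dots> \<in> vec.span ((\<lambda>i. axis i (1::'a)) ` I)"
      by (intro vec.span_sum vec.span_scale vec.span_base) auto
    finally show "x \<in> vec.span ((\<lambda>i. axis i (1::'a)) ` I)" .
  qed
  have "vec.dim (f ` A) \<le> card ((\<lambda>i. axis i (1::'a)) ` I)"
    using vec.dim_le_card[of "f ` A" "(\<lambda>i. axis i (1::'a)) ` I"] sub by simp
  also have "\<dots> \<le> card I" by (rule card_image_le) simp
  finally show False using d1 card by simp
qed

lemma dotp_smul_comm: "dotp (smul a c) b = dotp c (smul a (b::'a::field^'n::finite))"
  unfolding dotp_def smul_def by (auto intro: sum.cong simp: algebra_simps)

lemma dotp_comm: "dotp u v = dotp v (u::'a::field^'n::finite)"
  unfolding dotp_def by (auto intro: sum.cong simp: algebra_simps)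

lemma smul_comm: "smul u v = smul v (u::'a::field^'n::finite)"
  unfolding smul_def by (auto simp: vec_eq_iff algebra_simps)

lemma dotp_diff: "dotp h (x - y) = dotp h x - dotp h (y::'a::field^'n::finite)"
  unfolding dotp_def by (simp add: algebra_simps sum_subtractf)

lemma Hmul_eq_iff:
  assumes "full_rank_parity_check H C"
  shows "Hmul H x = Hmul H y \<longleftrightarrow> x - y \<in> C"
proof -
  have "x - y \<in> C \<longleftrightarrow> Hmul H (x - y) = map (\<lambda>_. 0) H"
    using assms unfolding full_rank_parity_check_def by blast
  also have "\<dots> \<longleftrightarrow> (\<forall>h\<in>set H. dotp h x = dotp h y)"
    unfolding Hmul_def by (simp add: dotp_diff)
  also have "\<dots> \<longleftrightarrow> Hmul H x = Hmul H y"
    unfolding Hmul_def by (simp add: map_eq_conv)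
  finally show ?thesis by simp
qed

lemma mindist_le:
  fixes X :: "('a::zero^'n::finite) set"
  assumes "x \<in> X" "x \<noteq> 0"
  shows "mindist X \<le> wt x"
proof -
  have "\<not> X \<subseteq> {0}" using assms by auto
  moreover have "finite {wt x | x. x \<in> X \<and> x \<noteq> 0}"
    by (rule finite_subset[of _ "{..CARD('n)}"])
       (auto simp: wt_def card_mono)
  ultimately show ?thesis
    unfolding mindist_def using assms by (auto intro: Min_le)
qed

lemma star_mem: "a \<in> A \<Longrightarrow> b \<in> B \<Longrightarrow> smul a b \<in> star_code A B"
  unfolding star_code_def by (rule vec.span_base) blast

lemma disjoint_wt:
  fixes a x :: "'a::zero^'n::finite"
  assumes "\<forall>i. a $ i = 0 \<or> x $ i = 0"
  shows "wt a + wt x \<le> CARD('n)"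
proof -
  have "supp a \<inter> supp x = {}" using assms unfolding supp_def by auto
  then have "wt a + wt x = card (supp a \<union> supp x)"
    unfolding wt_def by (simp add: card_Un_disjoint)
  also have "\<dots> \<le> CARD('n)" by (rule card_mono) auto
  finally show ?thesis .
qed

theorem theorem3p5:
  fixes C A B :: "('a::{finite,field}^'n::finite) set"
    and H :: "('a^'n) list"
    and y c e :: "'a^'n"
    and t :: nat
  assumes "vec.subspace C" and "vec.subspace A" and "vec.subspace B"
    and "t \<ge> 1"
    and "two_power_elp C A B t"
    and "full_rank_parity_check H C"
    and "c \<in> C" and "y = c + e" and "wt e = t"
  shows "(vanish_on A (supp e) = Mset A B C y \<longleftrightarrow> (\<forall>out \<in> alg_outputs C y t A B H. out = Some c))
       \<and> (vanish_on A (supp e) = Mset A B C y \<longleftrightarrow> Some c \<in> alg_outputs C y t A B H)"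
proof -
  note sC = assms(1) and sA = assms(2) and elp = assms(5) and fr = assms(6)
    and cC = assms(7) and yce = assms(8) and we = assms(9)
  define I where "I = supp e"
  define V where "V = vanish_on A I"
  define M where "M = Mset A B C y"
  define J where "J = zero_set M"
  define S where "S = {e'. e' \<noteq> 0 \<and> (\<forall>i. i \<notin> J \<longrightarrow> e' $ i = 0) \<and> Hmul H e' = Hmul H y}"
  have out: "alg_outputs C y t A B H = (if S = {} then {None} else (\<lambda>e'. Some (y - e')) ` S)"
    unfolding alg_outputs_def S_def J_def M_def Let_def by simp
  have AB: "star_code A B \<subseteq> dual C" and dimA: "vec.dim A > t"
    and dist: "mindist A + mindist C > CARD('n)"
    using elp unfolding two_power_elp_def by auto
  have MA: "M \<subseteq> A" unfolding M_def Mset_def M1_def by auto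
  have e0: "e \<noteq> 0" using we assms(4) unfolding wt_def supp_def by auto
  have VM: "V \<subseteq> M"
  proof
    fix a assume aV: "a \<in> V"
    then have aA: "a \<in> A" and av: "\<forall>i\<in>I. a $ i = 0" unfolding V_def vanish_on_def by auto
    have ay: "smul a y = smul a c"
      using av unfolding smul_def I_def supp_def yce by (auto simp: vec_eq_iff)
    have ay2: "smul a (vpow y 2) = smul (smul a c) c"
      using av unfolding smul_def vpow_def I_def supp_def yce
      by (auto simp: vec_eq_iff power2_eq_square) (metis add.right_neutral)
    have orth: "dotp c (smul a b) = 0" if "b \<in> B" for b
      using AB star_mem[OF aA that] cC unfolding dual_def by auto
    have m1: "a \<in> M1 A B y"
      unfolding M1_def using aA orth ay dotp_smul_comm[of a c] by simp
    have acB: "smul a c \<in> dual B"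
      unfolding dual_def using orth by (auto simp: dotp_comm[of _ "smul a c"] dotp_smul_comm)
    have m2: "a \<in> M2 A B C y"
      unfolding M2_def using aA star_mem[OF acB cC] by (auto simp: ay2 dual_def)
    show "a \<in> M" using m1 m2 unfolding M_def Mset_def by auto
  qed
  have cardI: "card I < vec.dim A" using we dimA unfolding I_def wt_def by simp
  obtain a0 where a0A: "a0 \<in> A" and a00: "a0 \<noteq> 0" and a0I: "\<forall>i\<in>I. a0 $ i = 0"
    using exists_vanish[OF sA cardI] by blast
  have a0V: "a0 \<in> V" unfolding V_def vanish_on_def using a0A a0I by auto
  have fwd: "(\<lambda>e'. Some (y - e')) ` S = {Some c} \<and> S \<noteq> {}" if MV: "M = V"
  proof -
    have eJ: "e $ i = 0" if "i \<notin> J" for i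
    proof (rule ccontr)
      assume "e $ i \<noteq> 0"
      then have "i \<in> I" unfolding I_def supp_def by simp
      then have "i \<in> J" unfolding J_def zero_set_def MV V_def vanish_on_def by auto
      then show False using that by simp
    qed
    have yeC: "e - y \<in> C" using cC sC yce by (simp add: vec.subspace_neg)
    have eS: "e \<in> S" unfolding S_def using e0 eJ Hmul_eq_iff[OF fr] yeC by auto
    have uniq: "e' = e" if "e' \<in> S" for e'
    proof (rule ccontr)
      assume ne: "e' \<noteq> e"
      have e'J: "\<forall>i. i \<notin> J \<longrightarrow> e' $ i = 0" and h: "Hmul H e' = Hmul H y"
        using that unfolding S_def by auto
      have "e' - y \<in> C" using h Hmul_eq_iff[OF fr] by simp
      then have "(e' - y) + c \<in> C" using sC cC by (simp add: vec.subspace_add)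
      then have xC: "e' - e \<in> C" using yce by (simp add: algebra_simps)
      have x0: "e' - e \<noteq> 0" using ne by simp
      have "\<forall>i. a0 $ i = 0 \<or> (e' - e) $ i = 0"
      proof
        fix i show "a0 $ i = 0 \<or> (e' - e) $ i = 0"
        proof (cases "i \<in> J")
          case True then show ?thesis using a0V unfolding J_def zero_set_def MV by auto
        next
          case False then show ?thesis using e'J eJ by simp
        qed
      qed
      then have "wt a0 + wt (e' - e) \<le> CARD('n)" by (rule disjoint_wt)
      moreover have "mindist A \<le> wt a0" by (rule mindist_le[OF a0A a00])
      moreover have "mindist C \<le> wt (e' - e)" by (rule mindist_le[OF xC x0])
      ultimately show False using dist by simp
    qed
    have "S = {e}" using eS uniq by blast
    then show ?thesis using yce by simp
  qed
  have bwd: "M = V" if cin: "Some c \<in> alg_outputs C y t A B H"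
  proof -
    have "S \<noteq> {}" using cin out by (auto split: if_splits)
    then obtain e' where e'S: "e' \<in> S" and "c = y - e'" using cin out by auto
    then have "e' = e" using yce by simp
    then have eJ: "\<forall>i. i \<notin> J \<longrightarrow> e $ i = 0" using e'S unfolding S_def by auto
    have "M \<subseteq> V"
    proof
      fix a assume aM: "a \<in> M"
      have "\<forall>i\<in>I. a $ i = 0"
      proof
        fix i assume "i \<in> I"
        then have "i \<in> J" using eJ unfolding I_def supp_def by auto
        then show "a $ i = 0" using aM unfolding J_def zero_set_def by auto
      qed
      then show "a \<in> V" using aM MA unfolding V_def vanish_on_def by auto
    qed
    then show ?thesis using VM by auto
  qed
  have nonempty: "alg_outputs C y t A B H \<noteq> {}" using out by auto
  show ?thesis
  proof (cases "M = V")
    case True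
    then show ?thesis using fwd[OF True] out unfolding M_def V_def I_def by auto
  next
    case False
    have "Some c \<notin> alg_outputs C y t A B H" using bwd False by blast
    moreover have "\<not> (\<forall>out \<in> alg_outputs C y t A B H. out = Some c)"
      using nonempty calculation by auto
    ultimately show ?thesis using False unfolding M_def V_def I_def by auto
  qed
qed

end
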